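(* Let $\sigma\in\widehat W$ be such that $\mathrm{ran}(\mathrm{id}-\sigma)$ is an affine hyperplane of $V$, and let \[\xi\in V_\sigma\setminus\bigcup_{I\subsetneq\{0,\dots,l\},\ |I|\ge2}V_{\sigma,I}.\] Then there are two distinct indices $i,i'\in\{0,\dots,l\}$ with $\xi\in V_{\sigma,i}\cap V_{\sigma,i'}$. Furthermore $w=\sigma s_i$ and $w'=\sigma s_{i'}$ both lie in $\widehat W_{\mathrm{reg}}$, one has $V_{w,i}=V_{\sigma,i}$ and $V_{w',i'}=V_{\sigma,i'}$, and the open polytopes $V_w$ and $V_{w'}$ lie on opposite sides of the affine hyperplane $\mathrm{ran}(\mathrm{id}-\sigma)$.
   Context: $V$ is a finite-dimensional real Euclidean space, $W$ an irreducible Weyl group acting on $V$ with simple roots $\alpha_1,\dots,\alpha_l$, highest root $\alpha_{\max}$, $\alpha_0:=-\alpha_{\max}$, $\alpha^\vee=2\alpha/\langle\alpha,\alpha\rangle$. Alcove $A=\{x\mid\langle\alpha_i,x\rangle+\delta_{i,0}>0,\ i=0,\dots,l\}$; for a proper subset $I\subsetneq\{0,\dots,l\}$ the face $A_I$ is given by equalities $\langle\alpha_i,x\rangle+\delta_{i,0}=0$ for $i\in I$ and strict inequalities for $i\notin I$; $A_i=A_{\{i\}}$. $\widehat W$ is generated by $s_i(x)=x-(\langle\alpha_i,x\rangle+\delta_{i,0})\alpha_i^\vee$, $i=0,\dots,l$. For $w\in\widehat W$, $\tilde w(x)=w(x)-w(0)$, $V_w=(\mathrm{id}-w)(A)$,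 $V_{w,I}=(\mathrm{id}-w)(A_I)$, $V_{w,i}=V_{w,\{i\}}$, where $(\mathrm{id}-w)(x)=x-w(x)$. $\widehat W_{\mathrm{reg}}=\{w\mid\mathrm{id}-\tilde w\text{ invertible}\}$. *)

theory Defs
  imports "HOL-Analysis.Analysis"
begin

definition coroot :: "'a::euclidean_space \<Rightarrow> 'a" where
  "coroot a = (2 / (a \<bullet> a)) *\<^sub>R a"

definition reflect :: "'a::euclidean_space \<Rightarrow> 'a \<Rightarrow> 'a" where
  "reflect a x = x - (a \<bullet> x) *\<^sub>R coroot a"

definition root_system :: "'a::euclidean_space set \<Rightarrow> bool" where
  "root_system R \<longleftrightarrow> finite R \<and> 0 \<notin> R \<and> span R = UNIV
     \<and> (\<forall>a\<in>R. \<forall>b\<in>R. reflect a b \<in> R)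
     \<and> (\<forall>a\<in>R. \<forall>b\<in>R. 2 * (a \<bullet> b) / (a \<bullet> a) \<in> \<int>)
     \<and> (\<forall>a\<in>R. \<forall>c::real. c *\<^sub>R a \<in> R \<longrightarrow> c = 1 \<or> c = -1)"

definition irreducible_rs :: "'a::euclidean_space set \<Rightarrow> bool" where
  "irreducible_rs R \<longleftrightarrow> \<not> (\<exists>R1 R2. R1 \<noteq> {} \<and> R2 \<noteq> {} \<and> R1 \<union> R2 = R
      \<and> (\<forall>a\<in>R1. \<forall>b\<in>R2. a \<bullet> b = 0))"

definition simple_system :: "'a::euclidean_space set \<Rightarrow> nat \<Rightarrow> (nat \<Rightarrow> 'a) \<Rightarrow> bool" where
  "simple_system R l alpha \<longleftrightarrow> (\<forall>i\<in>{1..l}. alpha i \<in> R) \<and> inj_on alpha {1..l}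
     \<and> independent (alpha ` {1..l})
     \<and> (\<forall>b\<in>R. \<exists>c::nat \<Rightarrow> int. b = (\<Sum>i=1..l. of_int (c i) *\<^sub>R alpha i)
            \<and> ((\<forall>i\<in>{1..l}. c i \<ge> 0) \<or> (\<forall>i\<in>{1..l}. c i \<le> 0)))"

definition highest_root :: "'a::euclidean_space set \<Rightarrow> nat \<Rightarrow> (nat \<Rightarrow> 'a) \<Rightarrow> 'a \<Rightarrow> bool" where
  "highest_root R l alpha m \<longleftrightarrow> m \<in> R \<and>
     (\<forall>b\<in>R. \<exists>c::nat \<Rightarrow> nat. m - b = (\<Sum>i=1..l. of_nat (c i) *\<^sub>R alpha i))"

definition affine_weyl_setup :: "'a::euclidean_space set \<Rightarrow> nat \<Rightarrow> (nat \<Rightarrow> 'a) \<Rightarrow> bool" where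
  "affine_weyl_setup R l alpha \<longleftrightarrow> root_system R \<and> irreducible_rs R \<and> simple_system R l alpha
     \<and> highest_root R l alpha (- alpha 0)"

definition delta0 :: "nat \<Rightarrow> real" where
  "delta0 i = (if i = 0 then 1 else 0)"

definition aff_s :: "(nat \<Rightarrow> 'a::euclidean_space) \<Rightarrow> nat \<Rightarrow> 'a \<Rightarrow> 'a" where
  "aff_s alpha i x = x - (alpha i \<bullet> x + delta0 i) *\<^sub>R coroot (alpha i)"

text \<open>The group generated by s_0, ..., s_l (each s_i is an involution, so closure
  under right multiplication by generators starting from id gives the whole group).\<close>
inductive_set affW :: "nat \<Rightarrow> (nat \<Rightarrow> 'a::euclidean_space) \<Rightarrow> ('a \<Rightarrow> 'a) set"
  for l alpha where
  id_in: "id \<in> affW l alpha"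
| step: "w \<in> affW l alpha \<Longrightarrow> i \<le> l \<Longrightarrow> w \<circ> aff_s alpha i \<in> affW l alpha"

definition alcove :: "nat \<Rightarrow> (nat \<Rightarrow> 'a::euclidean_space) \<Rightarrow> 'a set" where
  "alcove l alpha = {x. \<forall>i\<le>l. alpha i \<bullet> x + delta0 i > 0}"

definition face :: "nat \<Rightarrow> (nat \<Rightarrow> 'a::euclidean_space) \<Rightarrow> nat set \<Rightarrow> 'a set" where
  "face l alpha I = {x. (\<forall>i\<in>I. alpha i \<bullet> x + delta0 i = 0)
       \<and> (\<forall>i\<in>{0..l} - I. alpha i \<bullet> x + delta0 i > 0)}"

definition id_minus :: "('a::real_vector \<Rightarrow> 'a) \<Rightarrow> 'a \<Rightarrow> 'a" where
  "id_minus w x = x - w x"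

definition lin_part :: "('a::real_vector \<Rightarrow> 'a) \<Rightarrow> 'a \<Rightarrow> 'a" where
  "lin_part w x = w x - w 0"

definition Vw :: "nat \<Rightarrow> (nat \<Rightarrow> 'a::euclidean_space) \<Rightarrow> ('a \<Rightarrow> 'a) \<Rightarrow> 'a set" where
  "Vw l alpha w = id_minus w ` alcove l alpha"

definition VwI :: "nat \<Rightarrow> (nat \<Rightarrow> 'a::euclidean_space) \<Rightarrow> ('a \<Rightarrow> 'a) \<Rightarrow> nat set \<Rightarrow> 'a set" where
  "VwI l alpha w I = id_minus w ` face l alpha I"

definition affW_reg :: "nat \<Rightarrow> (nat \<Rightarrow> 'a::euclidean_space) \<Rightarrow> ('a \<Rightarrow> 'a) set" where
  "affW_reg l alpha = {w \<in> affW l alpha. bij (id_minus (lin_part w))}"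

end

theory Submission
  imports Defs
begin

definition refl_lin :: "'a::euclidean_space \<Rightarrow> 'a \<Rightarrow> 'a" where
  "refl_lin v x = x - (v \<bullet> x) *\<^sub>R coroot v"

lemma refl_lin_linear: "linear (refl_lin v)"
  unfolding refl_lin_def by (rule linearI) (simp_all add: algebra_simps inner_add_right)

lemma refl_lin_orth: "refl_lin v x \<bullet> refl_lin v y = x \<bullet> (y::'a::euclidean_space)"
proof (cases "v = 0")
  case True then show ?thesis by (simp add: refl_lin_def coroot_def)
next
  case False
  then have "v \<bullet> v \<noteq> 0" by simp
  then show ?thesis
    by (simp add: refl_lin_def coroot_def inner_diff_left inner_diff_right algebra_simps inner_commute)
qed

lemma aff_s_eq: "aff_s alpha i x = refl_lin (alpha i) x - delta0 i *\<^sub>R coroot (alpha i)"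
  by (simp add: aff_s_def refl_lin_def algebra_simps)

lemma affW_struct:
  assumes "w \<in> affW l alpha"
  shows "linear (lin_part w) \<and> (\<forall>x y. lin_part w x \<bullet> lin_part w y = x \<bullet> y)"
  using assms
proof induction
  case id_in
  then show ?case by (simp add: lin_part_def linear_id[unfolded id_def])
next
  case (step w i)
  let ?g = "lin_part w"
  have w: "\<And>x. w x = ?g x + w 0" by (simp add: lin_part_def)
  have eq: "lin_part (w \<circ> aff_s alpha i) = ?g \<circ> refl_lin (alpha i)"
  proof
    fix x
    have "lin_part (w \<circ> aff_s alpha i) x = ?g (aff_s alpha i x) - ?g (aff_s alpha i 0)"
      unfolding lin_part_def o_def by (subst (1 2) w) simp
    also have "\<dots> = ?g (aff_s alpha i x - aff_s alpha i 0)"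
      using step by (simp add: linear_diff)
    also have "aff_s alpha i x - aff_s alpha i 0 = refl_lin (alpha i) x"
      by (simp add: aff_s_eq refl_lin_def)
    finally show "lin_part (w \<circ> aff_s alpha i) x = (?g \<circ> refl_lin (alpha i)) x" by (simp add: o_def)
  qed
  show ?case unfolding eq using step
    using linear_compose[OF refl_lin_linear[of "alpha i"], of ?g]
    by (auto simp: refl_lin_orth o_def)
qed

lemma nonneg_zero:
  assumes std: "affine_weyl_setup R l alpha"
    and v: "\<forall>j\<le>l. alpha j \<bullet> v \<ge> 0"
  shows "v = (0::'a::euclidean_space)"
proof -
  have rs: "root_system R" and ss: "simple_system R l alpha" and hr: "highest_root R l alpha (- alpha 0)"
    using std by (auto simp: affine_weyl_setup_def)
  have k0: "alpha k \<bullet> v = 0" if k: "k \<in> {1..l}" for k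
  proof -
    have "alpha k \<in> R" using ss k by (auto simp: simple_system_def)
    then obtain c :: "nat \<Rightarrow> nat" where c: "- alpha 0 - alpha k = (\<Sum>i=1..l. of_nat (c i) *\<^sub>R alpha i)"
      using hr by (auto simp: highest_root_def)
    have "(- alpha 0 - alpha k) \<bullet> v = (\<Sum>i=1..l. of_nat (c i) * (alpha i \<bullet> v))"
      unfolding c by (simp add: inner_sum_left)
    also have "\<dots> \<ge> 0" using v by (intro sum_nonneg) auto
    finally have "alpha k \<bullet> v \<le> - (alpha 0 \<bullet> v)" by (simp add: inner_diff_left)
    moreover have "alpha 0 \<bullet> v \<ge> 0" "alpha k \<bullet> v \<ge> 0" using v k by auto
    ultimately show ?thesis by linarith
  qed
  have orth: "orthogonal v b" if b: "b \<in> R" for b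
  proof -
    obtain c :: "nat \<Rightarrow> int" where c: "b = (\<Sum>i=1..l. of_int (c i) *\<^sub>R alpha i)"
      using ss b by (auto simp: simple_system_def)
    have "b \<bullet> v = 0" unfolding c by (simp add: inner_sum_left k0)
    then show ?thesis by (simp add: orthogonal_def inner_commute)
  qed
  have "span R = UNIV" using rs by (simp add: root_system_def)
  then have "v \<in> span R" by simp
  then have "orthogonal v v" using orthogonal_to_span orth by blast
  then show ?thesis by (simp add: orthogonal_def)
qed

lemma exit_face:
  fixes alpha :: "nat \<Rightarrow> 'a::euclidean_space"
  assumes x0: "x0 \<in> alcove l alpha" and j1: "j1 \<le> l" "alpha j1 \<bullet> d < 0"
  shows "\<exists>J T. J \<subseteq> {0..l} \<and> J \<noteq> {} \<and> (\<forall>j\<in>J. alpha j \<bullet> d < 0)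
           \<and> x0 + T *\<^sub>R d \<in> face l alpha J"
proof -
  define c where "c j = alpha j \<bullet> x0 + delta0 j" for j
  define e where "e j = alpha j \<bullet> d" for j
  define P where "P = {j. j \<le> l \<and> e j < 0}"
  define q where "q j = c j / (- e j)" for j
  have cpos: "\<And>j. j \<le> l \<Longrightarrow> c j > 0" using x0 by (auto simp: alcove_def c_def)
  have finP: "finite P" unfolding P_def by auto
  have neP: "P \<noteq> {}" using j1 by (auto simp: P_def e_def)
  define T where "T = Min (q ` P)"
  have "T \<in> q ` P" unfolding T_def using finP neP by (intro Min_in) auto
  then obtain j0 where j0: "j0 \<in> P" "q j0 = T" by auto
  have Tle: "\<And>j. j \<in> P \<Longrightarrow> T \<le> q j" unfolding T_def using finP by auto
  define J where "J = {j \<in> P. q j = T}"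
  have val: "alpha j \<bullet> (x0 + T *\<^sub>R d) + delta0 j = c j + T * e j" for j
    by (simp add: c_def e_def inner_add_right)
  have T0: "T > 0" using j0 cpos[of j0] by (auto simp: P_def q_def divide_pos_neg)
  have zero: "c j + T * e j = 0" if "j \<in> J" for j
  proof -
    have "e j < 0" "T = c j / (- e j)" using that by (auto simp: J_def P_def q_def)
    then show ?thesis by (simp add: field_simps)
  qed
  have pos: "c j + T * e j > 0" if "j \<le> l" "j \<notin> J" for j
  proof (cases "e j < 0")
    case True
    then have "j \<in> P" using that by (simp add: P_def)
    then have "T < q j" using Tle that by (force simp: J_def)
    then show ?thesis using True by (simp add: q_def field_simps)
  next
    case False
    then show ?thesis using cpos[OF that(1)] T0 by (simp add: not_less) (smt (verit) mult_nonneg_nonneg)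
  qed
  show ?thesis
  proof (intro exI conjI)
    show "J \<subseteq> {0..l}" by (auto simp: J_def P_def)
    show "J \<noteq> {}" using j0 by (auto simp: J_def)
    show "\<forall>j\<in>J. alpha j \<bullet> d < 0" by (auto simp: J_def P_def e_def)
    show "x0 + T *\<^sub>R d \<in> face l alpha J"
      unfolding face_def using zero pos val by auto
  qed
qed


theorem proposition3p3:
  fixes R :: "'a::euclidean_space set" and l :: nat and alpha :: "nat \<Rightarrow> 'a"
    and \<sigma> :: "'a \<Rightarrow> 'a" and \<xi> :: 'a and a :: 'a and b :: real
  assumes std: "affine_weyl_setup R l alpha"
    and sigma: "\<sigma> \<in> affW l alpha"
    and hyp: "a \<noteq> 0" "range (id_minus \<sigma>) = {x. a \<bullet> x = b}"
    and xi: "\<xi> \<in> Vw l alpha \<sigma>"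
    and xi_gen: "\<forall>I. I \<subset> {0..l} \<and> card I \<ge> 2 \<longrightarrow> \<xi> \<notin> VwI l alpha \<sigma> I"
  shows "\<exists>i i'. i \<le> l \<and> i' \<le> l \<and> i \<noteq> i'
     \<and> \<xi> \<in> VwI l alpha \<sigma> {i} \<inter> VwI l alpha \<sigma> {i'}
     \<and> \<sigma> \<circ> aff_s alpha i \<in> affW_reg l alpha
     \<and> \<sigma> \<circ> aff_s alpha i' \<in> affW_reg l alpha
     \<and> VwI l alpha (\<sigma> \<circ> aff_s alpha i) {i} = VwI l alpha \<sigma> {i}
     \<and> VwI l alpha (\<sigma> \<circ> aff_s alpha i') {i'} = VwI l alpha \<sigma> {i'}
     \<and> ((Vw l alpha (\<sigma> \<circ> aff_s alpha i) \<subseteq> {x. a \<bullet> x < b}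
          \<and> Vw l alpha (\<sigma> \<circ> aff_s alpha i') \<subseteq> {x. a \<bullet> x > b})
      \<or> (Vw l alpha (\<sigma> \<circ> aff_s alpha i) \<subseteq> {x. a \<bullet> x > b}
          \<and> Vw l alpha (\<sigma> \<circ> aff_s alpha i') \<subseteq> {x. a \<bullet> x < b}))"
proof -
  define g where "g = lin_part \<sigma>"
  have lin: "linear g" and orth: "\<And>x y. g x \<bullet> g y = x \<bullet> y"
    using affW_struct[OF sigma] by (auto simp: g_def)
  have sig: "\<And>x. \<sigma> x = g x + \<sigma> 0" by (simp add: g_def lin_part_def)
  have idm: "id_minus \<sigma> x = x - g x - \<sigma> 0" for x using sig[of x] by (simp add: id_minus_def)
  have rb: "a \<bullet> (id_minus \<sigma> x) = b" for x using hyp(2) by blast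
  have b0: "a \<bullet> (- \<sigma> 0) = b" using rb[of 0] by (simp add: idm lin linear_0)
  have ran: "a \<bullet> (y - g y) = 0" for y
    using rb[of y] b0 by (simp add: idm inner_diff_right)
  have surjr: "\<exists>y. y - g y = z" if "a \<bullet> z = 0" for z
  proof -
    have "a \<bullet> (z - \<sigma> 0) = b" using that b0 by (simp add: inner_diff_right)
    then have "z - \<sigma> 0 \<in> range (id_minus \<sigma>)" using hyp(2) by blast
    then obtain y where "id_minus \<sigma> y = z - \<sigma> 0" by auto
    then show ?thesis by (auto simp: idm)
  qed
  have aa: "a \<bullet> a > 0" using hyp(1) by simp
  have ga: "g a = a"
  proof -
    have "a \<bullet> g a = a \<bullet> a" using ran[of a] by (simp add: inner_diff_right)
    then have "(g a - a) \<bullet> (g a - a) = 0"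
      by (simp add: inner_diff_left inner_diff_right orth inner_commute)
    then show ?thesis by simp
  qed
  have ginner: "a \<bullet> g v = a \<bullet> v" for v using orth[of a v] ga by simp
  have gneg: "g (- a) = - a" using ga lin by (simp add: linear_neg)
  have fixg: "v = (a \<bullet> v / (a \<bullet> a)) *\<^sub>R a" if "g v = v" for v
  proof -
    define c where "c = a \<bullet> v / (a \<bullet> a)"
    define z where "z = v - c *\<^sub>R a"
    have az: "a \<bullet> z = 0" using aa by (simp add: z_def c_def inner_diff_right)
    obtain y where y: "y - g y = z" using surjr[OF az] by blast
    have "v \<bullet> z = 0"
    proof -
      have "v \<bullet> z = v \<bullet> y - g v \<bullet> g y" using that y[symmetric] by (simp add: inner_diff_right)
      then show ?thesis by (simp add: orth)
    qed
    then have "z \<bullet> z = 0" using az by (simp add: z_def inner_diff_left)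
    then show ?thesis by (simp add: z_def c_def)
  qed
  obtain x0 where x0: "x0 \<in> alcove l alpha" and xi0: "\<xi> = id_minus \<sigma> x0"
    using xi by (auto simp: Vw_def)
  have ex_neg: "\<exists>j\<le>l. alpha j \<bullet> d < 0" if "d \<noteq> 0" for d
  proof (rule ccontr)
    assume "\<not> (\<exists>j\<le>l. alpha j \<bullet> d < 0)"
    then have "\<forall>j\<le>l. alpha j \<bullet> d \<ge> 0" by (simp add: not_less)
    then show False using nonneg_zero[OF std, of d] that by simp
  qed
  have exn: "\<exists>j\<le>l. alpha j \<bullet> a < 0" using ex_neg[OF hyp(1)] .
  have exp: "\<exists>j\<le>l. alpha j \<bullet> (- a) < 0" using ex_neg[of "- a"] hyp(1) by simp
  have get: "\<exists>i. i \<le> l \<and> alpha i \<bullet> d < 0 \<and> \<xi> \<in> VwI l alpha \<sigma> {i}"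
    if d: "g d = d" "\<exists>j\<le>l. alpha j \<bullet> d < 0" "\<exists>j\<le>l. alpha j \<bullet> d > 0" for d
  proof -
    obtain j1 where j1: "j1 \<le> l" "alpha j1 \<bullet> d < 0" using d by blast
    obtain j2 where j2: "j2 \<le> l" "alpha j2 \<bullet> d > 0" using d by blast
    obtain J T where J: "J \<subseteq> {0..l}" "J \<noteq> {}" "\<forall>j\<in>J. alpha j \<bullet> d < 0"
      and face: "x0 + T *\<^sub>R d \<in> face l alpha J"
      using exit_face[OF x0 j1] by blast
    have "id_minus \<sigma> (x0 + T *\<^sub>R d) = \<xi>"
      using d(1) by (simp add: xi0 idm lin linear_add linear_scale algebra_simps)
    then have xiJ: "\<xi> \<in> VwI l alpha \<sigma> J" using face unfolding VwI_def by (metis image_eqI)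
    have "j2 \<notin> J" using J j2 by auto
    then have "J \<subset> {0..l}" using J j2 by auto
    then have "\<not> card J \<ge> 2" using xi_gen xiJ by blast
    moreover have "finite J" using J(1) finite_subset by blast
    moreover have "card J > 0" using \<open>finite J\<close> J(2) by (simp add: card_gt_0_iff)
    ultimately have "card J = 1" by linarith
    then obtain i where "J = {i}" by (auto simp: card_1_singleton_iff)
    then show ?thesis using J xiJ by auto
  qed
  obtain i where i: "i \<le> l" "alpha i \<bullet> a < 0" "\<xi> \<in> VwI l alpha \<sigma> {i}"
    using get[of a] ga exn exp by auto
  obtain i' where i': "i' \<le> l" "alpha i' \<bullet> (- a) < 0" "\<xi> \<in> VwI l alpha \<sigma> {i'}"
    using get[of "- a"] gneg exn exp by auto
  have ne: "i \<noteq> i'" using i i' by auto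
  have reg: "\<sigma> \<circ> aff_s alpha k \<in> affW_reg l alpha" if k: "k \<le> l" "alpha k \<bullet> a \<noteq> 0" for k
  proof -
    let ?r = "refl_lin (alpha k)"
    have lp: "lin_part (\<sigma> \<circ> aff_s alpha k) = g \<circ> ?r"
    proof
      fix x
      have "lin_part (\<sigma> \<circ> aff_s alpha k) x = g (aff_s alpha k x - aff_s alpha k 0)"
        unfolding lin_part_def o_def sig[of "aff_s alpha k x"] sig[of "aff_s alpha k 0"]
        by (simp add: lin linear_diff)
      then show "lin_part (\<sigma> \<circ> aff_s alpha k) x = (g \<circ> ?r) x"
        by (simp add: aff_s_eq refl_lin_def)
    qed
    define h where "h = id_minus (g \<circ> ?r)"
    have hlin: "linear h" unfolding h_def id_minus_def
      using linear_compose[OF refl_lin_linear lin] by (intro linear_compose_sub linear_id[unfolded id_def]) (simp_all add: o_def)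
    have ak: "alpha k \<bullet> alpha k > 0" using k(2) by (metis inner_zero_left inner_gt_zero_iff)
    have ker: "x = 0" if hx: "h x = 0" for x
    proof -
      define u where "u = ?r x"
      have xu: "x = g u" using hx by (simp add: h_def id_minus_def u_def)
      have "a \<bullet> (u - x) = 0" using ran[of u] xu by simp
      moreover have "u - x = - (alpha k \<bullet> x) *\<^sub>R coroot (alpha k)" by (simp add: u_def refl_lin_def)
      ultimately have "(alpha k \<bullet> x) * (2 / (alpha k \<bullet> alpha k)) * (alpha k \<bullet> a) = 0"
        by (simp add: coroot_def inner_commute)
      then have akx: "alpha k \<bullet> x = 0" using ak k(2) by simp
      then have "u = x" by (simp add: u_def refl_lin_def)
      then have "g x = x" using xu by simp
      then have xc: "x = (a \<bullet> x / (a \<bullet> a)) *\<^sub>R a" by (rule fixg)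
      then have "alpha k \<bullet> x = (a \<bullet> x / (a \<bullet> a)) * (alpha k \<bullet> a)" by (metis inner_scaleR_right)
      then have "a \<bullet> x / (a \<bullet> a) = 0" using akx k(2) by simp
      then show ?thesis using xc by (metis scale_zero_left)
    qed
    have "inj h" using hlin ker by (simp add: linear_inj_iff_eq_0)
    moreover have "surj h" using hlin \<open>inj h\<close> by (simp add: linear_injective_imp_surjective)
    ultimately have "bij h" by (simp add: bij_def)
    moreover have "\<sigma> \<circ> aff_s alpha k \<in> affW l alpha" using affW.step[OF sigma k(1)] .
    ultimately show ?thesis by (simp add: affW_reg_def lp h_def)
  qed
  have feq: "VwI l alpha (\<sigma> \<circ> aff_s alpha k) {k} = VwI l alpha \<sigma> {k}" for k
  proof -
    have "\<And>x. x \<in> face l alpha {k} \<Longrightarrow> id_minus (\<sigma> \<circ> aff_s alpha k) x = id_minus \<sigma> x"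
      by (simp add: face_def aff_s_def id_minus_def)
    then show ?thesis unfolding VwI_def by (rule image_cong[OF refl])
  qed
  have side: "a \<bullet> y - b = (alpha k \<bullet> x + delta0 k) * (2 / (alpha k \<bullet> alpha k)) * (alpha k \<bullet> a)"
    if "y = id_minus (\<sigma> \<circ> aff_s alpha k) x" for k x y
  proof -
    have "y = id_minus \<sigma> x + (alpha k \<bullet> x + delta0 k) *\<^sub>R g (coroot (alpha k))"
      using that unfolding id_minus_def o_def sig[of "aff_s alpha k x"] sig[of x]
      by (simp add: aff_s_def lin linear_diff linear_add linear_scale algebra_simps)
    then have "a \<bullet> y = b + (alpha k \<bullet> x + delta0 k) * (a \<bullet> coroot (alpha k))"
      by (simp add: inner_add_right rb ginner)
    then show ?thesis by (simp add: coroot_def inner_commute)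
  qed
  have cpos: "alpha k \<bullet> x + delta0 k > 0" if "x \<in> alcove l alpha" "k \<le> l" for k x
    using that by (simp add: alcove_def)
  have kpos: "2 / (alpha k \<bullet> alpha k) > 0" if "alpha k \<bullet> a \<noteq> 0" for k
    using that by (metis divide_pos_pos inner_zero_left inner_gt_zero_iff zero_less_numeral)
  have s1: "Vw l alpha (\<sigma> \<circ> aff_s alpha i) \<subseteq> {x. a \<bullet> x < b}"
  proof
    fix y assume "y \<in> Vw l alpha (\<sigma> \<circ> aff_s alpha i)"
    then obtain x where x: "x \<in> alcove l alpha" "y = id_minus (\<sigma> \<circ> aff_s alpha i) x"
      by (auto simp: Vw_def)
    have "(alpha i \<bullet> x + delta0 i) * (2 / (alpha i \<bullet> alpha i)) > 0"
      using cpos[OF x(1) i(1)] kpos[of i] i(2) by simp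
    then have "(alpha i \<bullet> x + delta0 i) * (2 / (alpha i \<bullet> alpha i)) * (alpha i \<bullet> a) < 0"
      using i(2) by (intro mult_pos_neg)
    then show "y \<in> {x. a \<bullet> x < b}" using side[OF x(2)] by simp
  qed
  have s2: "Vw l alpha (\<sigma> \<circ> aff_s alpha i') \<subseteq> {x. a \<bullet> x > b}"
  proof
    fix y assume "y \<in> Vw l alpha (\<sigma> \<circ> aff_s alpha i')"
    then obtain x where x: "x \<in> alcove l alpha" "y = id_minus (\<sigma> \<circ> aff_s alpha i') x"
      by (auto simp: Vw_def)
    have pp: "(alpha i' \<bullet> x + delta0 i') * (2 / (alpha i' \<bullet> alpha i')) > 0"
      using cpos[OF x(1) i'(1)] kpos[of i'] i'(2) by simp
    then have "(alpha i' \<bullet> x + delta0 i') * (2 / (alpha i' \<bullet> alpha i')) * (alpha i' \<bullet> a) > 0"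
      using i'(2) by (intro mult_pos_pos[OF pp]) simp
    then show "y \<in> {x. a \<bullet> x > b}" using side[OF x(2)] by simp
  qed
  show ?thesis
  proof (intro exI conjI)
    show "i \<le> l" "i' \<le> l" "i \<noteq> i'" by (fact i(1), fact i'(1), fact ne)
    show "\<xi> \<in> VwI l alpha \<sigma> {i} \<inter> VwI l alpha \<sigma> {i'}" using i(3) i'(3) by blast
    show "\<sigma> \<circ> aff_s alpha i \<in> affW_reg l alpha" using reg[of i] i by simp
    show "\<sigma> \<circ> aff_s alpha i' \<in> affW_reg l alpha" using reg[of i'] i' by simp
    show "VwI l alpha (\<sigma> \<circ> aff_s alpha i) {i} = VwI l alpha \<sigma> {i}" by (rule feq)
    show "VwI l alpha (\<sigma> \<circ> aff_s alpha i') {i'} = VwI l alpha \<sigma> {i'}" by (rule feq)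
    show "Vw l alpha (\<sigma> \<circ> aff_s alpha i) \<subseteq> {x. a \<bullet> x < b} \<and> Vw l alpha (\<sigma> \<circ> aff_s alpha i') \<subseteq> {x. a \<bullet> x > b} \<or> (Vw l alpha (\<sigma> \<circ> aff_s alpha i) \<subseteq> {x. a \<bullet> x > b} \<and> Vw l alpha (\<sigma> \<circ> aff_s alpha i') \<subseteq> {x. a \<bullet> x < b})"
      using s1 s2 by blast
  qed
qed

end
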